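(* Let $\|\cdot\|_C$ be any norm on $\mathbb{R}^N$ and $\|\cdot\|_R$ any norm on $\mathbb{R}^P$, and let $f_D^M$ be defined as in the context. Then for every $X\in\mathbb{R}^{N\times P}$ the limit $f_D^\infty(X)=\lim_{M\to\infty} f_D^M(X)$ exists (and is finite), and the map $X\mapsto f_D^\infty(X)$ is a norm on $\mathbb{R}^{N\times P}$.
   Context: For $M\ge 1$ and $X\in\mathbb{R}^{N\times P}$, define $$f_D^M(X)=\inf\Big\{\tfrac12\sum_{m=1}^M\big(\|u_m\|_C^2+\|v_m\|_R^2\big)\;:\;U=[u_1,\dots,u_M]\in\mathbb{R}^{N\times M},\ V=[v_1,\dots,v_M]\in\mathbb{R}^{P\times M},\ X=UV^\top\Big\},$$ where $u_m$, $v_m$ denote the $m$-th columns of $U$, $V$; if $M<\operatorname{rank}X$ the set is empty and $f_D^M(X)=+\infty$. The limit $f_D^\infty(X)$ is denoted $\|X\|_D$ (the "decomposition norm"). *)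

theory Defs
  imports "HOL-Analysis.Analysis" "HOL-Library.Extended_Real"
begin

definition is_norm :: "('a::real_vector \<Rightarrow> real) \<Rightarrow> bool" where
  "is_norm f \<longleftrightarrow>
     (\<forall>x. 0 \<le> f x) \<and> (\<forall>x. f x = 0 \<longleftrightarrow> x = 0) \<and>
     (\<forall>c x. f (c *\<^sub>R x) = \<bar>c\<bar> * f x) \<and> (\<forall>x y. f (x + y) \<le> f x + f y)"

text \<open>Matrices X in R^(N x P) are of type real^'p^'n (row index 'n, column index 'p).
  U = [u_1..u_M] and V = [v_1..v_M] are given by their columns u m, v m (m < M);
  X = U V^T means X_ij = sum_{m<M} (u m)_i (v m)_j.
  f_D^M(X) is the infimum in the extended reals, so it is +infinity on the empty set.\<close>
definition fDM :: "(real^'n \<Rightarrow> real) \<Rightarrow> (real^'p \<Rightarrow> real) \<Rightarrow> nat \<Rightarrow> real^'p^'n \<Rightarrow> ereal" where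
  "fDM C R M X = Inf {ereal ((1/2) * (\<Sum>m<M. (C (u m))\<^sup>2 + (R (v m))\<^sup>2)) | u v.
      (\<forall>i j. X $ i $ j = (\<Sum>m<M. u m $ i * v m $ j))}"

definition fD_inf :: "(real^'n \<Rightarrow> real) \<Rightarrow> (real^'p \<Rightarrow> real) \<Rightarrow> real^'p^'n \<Rightarrow> real" where
  "fD_inf C R X = real_of_ereal (lim (\<lambda>M. fDM C R M X))"

end

theory Submission
  imports Defs
begin

lemma sum_split_add: "(\<Sum>i<m+n. f i) = (\<Sum>i<m. f i) + (\<Sum>i<n. f (m+i::nat))"
  by (induction n) (auto simp: add.assoc)

lemma norm_props:
  assumes "is_norm C"
  shows "C 0 = 0" "\<And>x. C x \<ge> 0" "\<And>c x. C (c *\<^sub>R x) = \<bar>c\<bar> * C x"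
    "\<And>x y. C (x + y) \<le> C x + C y" "\<And>x. C x = 0 \<longleftrightarrow> x = 0"
  using assms unfolding is_norm_def by auto

lemma norm_lip:
  assumes "is_norm C"
  shows "\<bar>C x - C y\<bar> \<le> C (x - y)"
proof -
  note n = norm_props[OF assms]
  have "C x \<le> C (x - y) + C y" using n(4)[of "x-y" y] by simp
  moreover have "C y \<le> C (y - x) + C x" using n(4)[of "y-x" x] by simp
  moreover have "C (y - x) = C (x - y)" using n(3)[of "-1" "x-y"] by simp
  ultimately show ?thesis by linarith
qed

lemma norm_upper:
  fixes C :: "real^'n \<Rightarrow> real"
  assumes "is_norm C"
  shows "C u \<le> norm u * (\<Sum>i\<in>UNIV. C (axis i 1))"
proof -
  note n = norm_props[OF assms]
  have sumC: "C (\<Sum>i\<in>A. f i) \<le> (\<Sum>i\<in>A. C (f i))" if "finite A" for A and f :: "'n \<Rightarrow> real^'n"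
    using that by (induction A rule: finite_induct) (auto simp: n(1) intro: order_trans[OF n(4)])
  have "u = (\<Sum>i\<in>UNIV. (u $ i) *\<^sub>R axis i 1)"
    by (simp add: vec_eq_iff axis_def if_distrib cong: if_cong)
  then have "C u \<le> (\<Sum>i\<in>UNIV. C ((u $ i) *\<^sub>R axis i 1))" using sumC[of UNIV "\<lambda>i. (u $ i) *\<^sub>R axis i 1"] by simp
  also have "\<dots> = (\<Sum>i\<in>UNIV. \<bar>u $ i\<bar> * C (axis i 1))" by (simp add: n(3))
  also have "\<dots> \<le> (\<Sum>i\<in>UNIV. norm u * C (axis i 1))"
    by (intro sum_mono mult_right_mono) (auto simp: component_le_norm_cart n(2))
  finally show ?thesis by (simp add: sum_distrib_left)
qed

lemma norm_coord_bound:
  fixes C :: "real^'n \<Rightarrow> real"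
  assumes "is_norm C"
  shows "\<exists>a>0. \<forall>u i. \<bar>u $ i\<bar> \<le> a * C u"
proof -
  note n = norm_props[OF assms]
  define B where "B = (\<Sum>i\<in>UNIV. C (axis i (1::real)))"
  have B0: "B \<ge> 0" unfolding B_def by (intro sum_nonneg n(2))
  have cont: "continuous_on UNIV C"
  proof (rule continuous_onI)
    fix x e :: real and y :: "real^'n" assume e: "e > 0"
    show "\<exists>d>0. \<forall>x'\<in>UNIV. dist x' y < d \<longrightarrow> dist (C x') (C y) \<le> e"
    proof (intro exI[of _ "e / (B + 1)"] conjI ballI impI)
      show "e / (B + 1) > 0" using e B0 by simp
      fix x' assume "dist x' y < e / (B + 1)"
      then have d: "norm (x' - y) * (B + 1) < e" using B0 by (simp add: dist_norm field_simps)
      have "dist (C x') (C y) \<le> C (x' - y)" using norm_lip[OF assms] by (simp add: dist_real_def)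
      also have "\<dots> \<le> norm (x' - y) * B" using norm_upper[OF assms] B_def by simp
      also have "\<dots> \<le> norm (x' - y) * (B + 1)" by (simp add: mult_left_mono)
      finally show "dist (C x') (C y) \<le> e" using d by simp
    qed
  qed
  have ne: "sphere (0::real^'n) 1 \<noteq> {}"
    by (metis norm_axis_1 mem_sphere_0 empty_iff)
  obtain x where x: "x \<in> sphere 0 1" "\<And>y. y \<in> sphere 0 1 \<Longrightarrow> C x \<le> C y"
    using continuous_attains_inf[OF compact_sphere ne continuous_on_subset[OF cont]] by auto
  define m where "m = C x"
  have m0: "m > 0" using x(1) n(2)[of x] n(5)[of x] unfolding m_def by fastforce
  show ?thesis
  proof (intro exI[of _ "1/m"] conjI allI)
    show "1/m > 0" using m0 by simp
    fix u :: "real^'n" and i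
    show "\<bar>u $ i\<bar> \<le> 1/m * C u"
    proof (cases "u = 0")
      case True then show ?thesis by (simp add: n(1))
    next
      case False
      then have "m \<le> C ((1/norm u) *\<^sub>R u)" using x(2)[of "(1/norm u) *\<^sub>R u"] m_def by simp
      also have "\<dots> = C u / norm u" by (simp add: n(3))
      finally have "m * norm u \<le> C u" using False by (simp add: field_simps)
      moreover have "\<bar>u $ i\<bar> \<le> norm u" by (rule component_le_norm_cart)
      ultimately have "m * \<bar>u $ i\<bar> \<le> C u" using m0 by (meson mult_left_mono order_trans less_imp_le)
      then show ?thesis using m0 by (simp add: field_simps)
    qed
  qed
qed


definition decS :: "(real^'n \<Rightarrow> real) \<Rightarrow> (real^'p \<Rightarrow> real) \<Rightarrow> (real^'p^'n) \<Rightarrow> real set" where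
  "decS C R X = {(1/2) * (\<Sum>m<(M::nat). (C (u m))\<^sup>2 + (R (v m))\<^sup>2) | M u v.
      (\<forall>i j. X $ i $ j = (\<Sum>m<M. u m $ i * v m $ j))}"

lemma decS_nonneg: "s \<in> decS C R X \<Longrightarrow> 0 \<le> s"
proof -
  assume "s \<in> decS C R X"
  then obtain M :: nat and u v where "s = (1/2) * (\<Sum>m<M. (C (u m))\<^sup>2 + (R (v m))\<^sup>2)"
    unfolding decS_def by blast
  moreover have "0 \<le> (\<Sum>m<M. (C (u m))\<^sup>2 + (R (v m))\<^sup>2)" by (intro sum_nonneg) auto
  ultimately show ?thesis by simp
qed

lemma decS_bdd: "bdd_below (decS C R X)"
  using decS_nonneg by (meson bdd_belowI)

lemma decS_zero: "0 \<in> decS C R 0"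
  unfolding decS_def by (rule CollectI, rule exI[of _ 0]) auto

lemma decS_nonempty:
  fixes C :: "real^'n \<Rightarrow> real" and X :: "real^'p^'n"
  shows "decS C R X \<noteq> {}"
proof -
  obtain h where h: "bij_betw h {0..<card (UNIV::'n set)} (UNIV::'n set)"
    using ex_bij_betw_nat_finite[of "UNIV::'n set"] by auto
  define u where "u m = (axis (h m) (1::real) :: real^'n)" for m
  define v where "v m = (\<chi> j. X $ h m $ j)" for m
  have "X $ i $ j = (\<Sum>m<card (UNIV::'n set). u m $ i * v m $ j)" for i j
  proof -
    have "(\<Sum>m<card (UNIV::'n set). u m $ i * v m $ j)
        = (\<Sum>m\<in>{0..<card (UNIV::'n set)}. (\<lambda>k. (if i = k then 1 else 0) * X $ k $ j) (h m))"
      by (simp add: lessThan_atLeast0 u_def v_def axis_def)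
    also have "\<dots> = (\<Sum>k\<in>UNIV. (if i = k then 1 else 0) * X $ k $ j)"
      using sum.reindex_bij_betw[OF h, of "\<lambda>k. (if i = k then 1 else 0) * X $ k $ j"] by simp
    also have "\<dots> = (\<Sum>k\<in>UNIV. if i = k then X $ k $ j else 0)" by (intro sum.cong) auto
    also have "\<dots> = X $ i $ j" by (simp add: sum.delta)
    finally show ?thesis by simp
  qed
  then show ?thesis unfolding decS_def by blast
qed

lemma decS_scale:
  assumes C: "is_norm C" and R: "is_norm R" and s: "s \<in> decS C R X"
  shows "\<bar>c\<bar> * s \<in> decS C R (c *\<^sub>R X)"
proof -
  obtain M :: nat and u v where sv: "s = (1/2) * (\<Sum>m<M. (C (u m))\<^sup>2 + (R (v m))\<^sup>2)"
    and d: "\<forall>i j. X $ i $ j = (\<Sum>m<M. u m $ i * v m $ j)"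
    using s unfolding decS_def by blast
  define u' where "u' m = sqrt \<bar>c\<bar> *\<^sub>R u m" for m
  define v' where "v' m = (sgn c * sqrt \<bar>c\<bar>) *\<^sub>R v m" for m
  have "sqrt \<bar>c\<bar> * (sgn c * sqrt \<bar>c\<bar>) = sgn c * (sqrt \<bar>c\<bar> * sqrt \<bar>c\<bar>)"
    by (simp only: mult_ac)
  also have "\<dots> = sgn c * \<bar>c\<bar>" by simp
  also have "\<dots> = c" by (simp add: sgn_mult_abs)
  finally have cc: "sqrt \<bar>c\<bar> * (sgn c * sqrt \<bar>c\<bar>) = c" .
  have "(c *\<^sub>R X) $ i $ j = (\<Sum>m<M. u' m $ i * v' m $ j)" for i j
  proof -
    have "(c *\<^sub>R X) $ i $ j = c * (\<Sum>m<M. u m $ i * v m $ j)" using d by simp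
    also have "\<dots> = (\<Sum>m<M. u' m $ i * v' m $ j)"
      unfolding sum_distrib_left
    proof (intro sum.cong refl)
      fix m
      have "u' m $ i * v' m $ j = (sqrt \<bar>c\<bar> * (sgn c * sqrt \<bar>c\<bar>)) * (u m $ i * v m $ j)"
        unfolding u'_def v'_def by (simp add: mult_ac)
      then show "c * (u m $ i * v m $ j) = u' m $ i * v' m $ j" using cc by simp
    qed
    finally show ?thesis .
  qed
  moreover have "\<bar>c\<bar> * s = (1/2) * (\<Sum>m<M. (C (u' m))\<^sup>2 + (R (v' m))\<^sup>2)"
  proof -
    have a: "\<bar>sgn c * sqrt \<bar>c\<bar>\<bar> = sqrt \<bar>c\<bar>" by (cases "c = 0") (auto simp: abs_mult)
    have "(C (u' m))\<^sup>2 + (R (v' m))\<^sup>2 = \<bar>c\<bar> * ((C (u m))\<^sup>2 + (R (v m))\<^sup>2)" for m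
    proof -
      have "(C (u' m))\<^sup>2 = (sqrt \<bar>c\<bar>)\<^sup>2 * (C (u m))\<^sup>2"
        unfolding u'_def norm_props(3)[OF C] by (simp add: power_mult_distrib)
      moreover have "(R (v' m))\<^sup>2 = (sqrt \<bar>c\<bar>)\<^sup>2 * (R (v m))\<^sup>2"
        unfolding v'_def norm_props(3)[OF R] a by (simp add: power_mult_distrib)
      ultimately show ?thesis by (simp add: distrib_left)
    qed
    then show ?thesis unfolding sv by (simp add: sum_distrib_left)
  qed
  ultimately show ?thesis unfolding decS_def by blast
qed

lemma decS_add:
  assumes s: "s \<in> decS C R X" and t: "t \<in> decS C R Y"
  shows "s + t \<in> decS C R (X + Y)"
proof -
  obtain M :: nat and u v where sv: "s = (1/2) * (\<Sum>m<M. (C (u m))\<^sup>2 + (R (v m))\<^sup>2)"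
    and d: "\<forall>i j. X $ i $ j = (\<Sum>m<M. u m $ i * v m $ j)"
    using s unfolding decS_def by blast
  obtain M2 :: nat and u2 v2 where tv: "t = (1/2) * (\<Sum>m<M2. (C (u2 m))\<^sup>2 + (R (v2 m))\<^sup>2)"
    and d2: "\<forall>i j. Y $ i $ j = (\<Sum>m<M2. u2 m $ i * v2 m $ j)"
    using t unfolding decS_def by blast
  define u' where "u' m = (if m < M then u m else u2 (m - M))" for m
  define v' where "v' m = (if m < M then v m else v2 (m - M))" for m
  have "(X + Y) $ i $ j = (\<Sum>m<M+M2. u' m $ i * v' m $ j)" for i j
  proof -
    have "(\<Sum>m<M. u' m $ i * v' m $ j) = (\<Sum>m<M. u m $ i * v m $ j)"
      by (intro sum.cong) (auto simp: u'_def v'_def)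
    moreover have "(\<Sum>m<M2. u' (M+m) $ i * v' (M+m) $ j) = (\<Sum>m<M2. u2 m $ i * v2 m $ j)"
      by (simp add: u'_def v'_def)
    ultimately show ?thesis unfolding sum_split_add using d d2 by simp
  qed
  moreover have "s + t = (1/2) * (\<Sum>m<M+M2. (C (u' m))\<^sup>2 + (R (v' m))\<^sup>2)"
  proof -
    have "(\<Sum>m<M. (C (u' m))\<^sup>2 + (R (v' m))\<^sup>2) = (\<Sum>m<M. (C (u m))\<^sup>2 + (R (v m))\<^sup>2)"
      by (intro sum.cong) (auto simp: u'_def v'_def)
    moreover have "(\<Sum>m<M2. (C (u' (M+m)))\<^sup>2 + (R (v' (M+m)))\<^sup>2) = (\<Sum>m<M2. (C (u2 m))\<^sup>2 + (R (v2 m))\<^sup>2)"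
      by (simp add: u'_def v'_def)
    ultimately show ?thesis unfolding sum_split_add sv tv by (simp add: distrib_left)
  qed
  ultimately show ?thesis unfolding decS_def by blast
qed

lemma decS_coord:
  assumes C: "is_norm C" and R: "is_norm R"
  shows "\<exists>K>0. \<forall>X s i j. s \<in> decS C R X \<longrightarrow> \<bar>X $ i $ j\<bar> \<le> K * s"
proof -
  obtain a where a: "a > 0" "\<And>u i. \<bar>u $ i\<bar> \<le> a * C u" using norm_coord_bound[OF C] by blast
  obtain b where b: "b > 0" "\<And>u i. \<bar>u $ i\<bar> \<le> b * R u" using norm_coord_bound[OF R] by blast
  show ?thesis
  proof (intro exI[of _ "a*b"] conjI allI impI)
    show "a * b > 0" using a b by simp
    fix X s i j assume s: "s \<in> decS C R X"
    obtain M :: nat and u v where sv: "s = (1/2) * (\<Sum>m<M. (C (u m))\<^sup>2 + (R (v m))\<^sup>2)"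
      and d: "\<forall>i j. X $ i $ j = (\<Sum>m<M. u m $ i * v m $ j)"
      using s unfolding decS_def by blast
    have "\<bar>X $ i $ j\<bar> \<le> (\<Sum>m<M. \<bar>u m $ i * v m $ j\<bar>)" using d sum_abs by metis
    also have "\<dots> \<le> (\<Sum>m<M. (a * C (u m)) * (b * R (v m)))"
      unfolding abs_mult using norm_props(2)[OF C] norm_props(2)[OF R] a(1) b(1)
      by (intro sum_mono mult_mono a b) auto
    also have "\<dots> \<le> (\<Sum>m<M. a * b * ((1/2) * ((C (u m))\<^sup>2 + (R (v m))\<^sup>2)))"
    proof (intro sum_mono)
      fix m
      have "2 * (C (u m) * R (v m)) \<le> (C (u m))\<^sup>2 + (R (v m))\<^sup>2"
        using sum_squares_bound[of "C (u m)" "R (v m)"] by simp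
      then have "C (u m) * R (v m) \<le> (1/2) * ((C (u m))\<^sup>2 + (R (v m))\<^sup>2)" by simp
      then have "a * b * (C (u m) * R (v m)) \<le> a * b * ((1/2) * ((C (u m))\<^sup>2 + (R (v m))\<^sup>2))"
        using a b by (intro mult_left_mono) auto
      then show "(a * C (u m)) * (b * R (v m)) \<le> a * b * ((1/2) * ((C (u m))\<^sup>2 + (R (v m))\<^sup>2))"
        by (simp add: algebra_simps)
    qed
    also have "\<dots> = a * b * s" unfolding sv by (simp add: sum_distrib_left)
    finally show "\<bar>X $ i $ j\<bar> \<le> a * b * s" .
  qed
qed


lemma fDM_INF:
  fixes C :: "real^'n \<Rightarrow> real" and R :: "real^'p \<Rightarrow> real" and X :: "real^'p^'n"
  shows "(INF M. fDM C R M X) = ereal (Inf (decS C R X))"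
proof -
  have e: "ereal (Inf (decS C R X)) = (INF a\<in>decS C R X. ereal a)"
    by (rule ereal_Inf'[OF decS_bdd decS_nonempty])
  have "(INF M. fDM C R M X) \<le> (INF a\<in>decS C R X. ereal a)"
  proof (rule INF_greatest)
    fix a assume "a \<in> decS C R X"
    then obtain M :: nat and u v where a: "a = (1/2) * (\<Sum>m<M. (C (u m))\<^sup>2 + (R (v m))\<^sup>2)"
      and d: "\<forall>i j. X $ i $ j = (\<Sum>m<M. u m $ i * v m $ j)"
      unfolding decS_def by blast
    have "fDM C R M X \<le> ereal a" unfolding fDM_def a by (rule Inf_lower) (use d in blast)
    then show "(INF M. fDM C R M X) \<le> ereal a" by (meson INF_lower UNIV_I order_trans)
  qed
  moreover have "(INF a\<in>decS C R X. ereal a) \<le> (INF M. fDM C R M X)"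
  proof (rule INF_greatest)
    fix M :: nat assume "M \<in> UNIV"
    show "(INF a\<in>decS C R X. ereal a) \<le> fDM C R M X"
      unfolding fDM_def
    proof (rule Inf_greatest)
      fix y assume "y \<in> {ereal ((1/2) * (\<Sum>m<M. (C (u m))\<^sup>2 + (R (v m))\<^sup>2)) | u v.
      (\<forall>i j. X $ i $ j = (\<Sum>m<M. u m $ i * v m $ j))}"
      then obtain u v where y: "y = ereal ((1/2) * (\<Sum>m<M. (C (u m))\<^sup>2 + (R (v m))\<^sup>2))"
        and d: "\<forall>i j. X $ i $ j = (\<Sum>m<M. u m $ i * v m $ j)" by blast
      have "(1/2) * (\<Sum>m<M. (C (u m))\<^sup>2 + (R (v m))\<^sup>2) \<in> decS C R X"
        unfolding decS_def using d by blast
      then show "(INF a\<in>decS C R X. ereal a) \<le> y" unfolding y by (rule INF_lower)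
    qed
  qed
  ultimately show ?thesis using e by simp
qed

lemma fDM_dec:
  assumes C: "is_norm C" and R: "is_norm R"
  shows "decseq (\<lambda>M. fDM C R M X)"
proof (rule decseq_SucI)
  fix M
  show "fDM C R (Suc M) X \<le> fDM C R M X"
    unfolding fDM_def
  proof (rule Inf_mono, safe)
    fix u v assume d: "\<forall>i j. X $ i $ j = (\<Sum>m<M. u m $ i * v m $ j)"
    define u' where "u' = u(M := 0)"
    define v' where "v' = v(M := 0)"
    have s1: "(\<Sum>m<M. u' m $ i * v' m $ j) = (\<Sum>m<M. u m $ i * v m $ j)" for i j
      by (intro sum.cong) (auto simp: u'_def v'_def)
    have s2: "(\<Sum>m<M. (C (u' m))\<^sup>2 + (R (v' m))\<^sup>2) = (\<Sum>m<M. (C (u m))\<^sup>2 + (R (v m))\<^sup>2)"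
      by (intro sum.cong) (auto simp: u'_def v'_def)
    have z: "u' M = 0" "v' M = 0" by (simp_all add: u'_def v'_def)
    have mem: "ereal ((1/2) * (\<Sum>m<Suc M. (C (u' m))\<^sup>2 + (R (v' m))\<^sup>2)) \<in>
      {ereal ((1/2) * (\<Sum>m<Suc M. (C (u m))\<^sup>2 + (R (v m))\<^sup>2)) | u v.
      (\<forall>i j. X $ i $ j = (\<Sum>m<Suc M. u m $ i * v m $ j))}"
    proof -
      have d': "\<forall>i j. X $ i $ j = (\<Sum>m<Suc M. u' m $ i * v' m $ j)"
      proof (intro allI)
        fix i j
        have "(\<Sum>m<Suc M. u' m $ i * v' m $ j) = (\<Sum>m<M. u' m $ i * v' m $ j) + u' M $ i * v' M $ j"
          by (rule sum.lessThan_Suc)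
        also have "\<dots> = (\<Sum>m<M. u m $ i * v m $ j)" unfolding s1 z by simp
        finally show "X $ i $ j = (\<Sum>m<Suc M. u' m $ i * v' m $ j)" using d by simp
      qed
      show ?thesis by (rule CollectI, rule exI[of _ u'], rule exI[of _ v'], intro conjI refl d')
    qed
    have eq: "ereal ((1/2) * (\<Sum>m<Suc M. (C (u' m))\<^sup>2 + (R (v' m))\<^sup>2))
       = ereal ((1/2) * (\<Sum>m<M. (C (u m))\<^sup>2 + (R (v m))\<^sup>2))"
    proof -
      have "(\<Sum>m<Suc M. (C (u' m))\<^sup>2 + (R (v' m))\<^sup>2) = (\<Sum>m<M. (C (u' m))\<^sup>2 + (R (v' m))\<^sup>2) + ((C (u' M))\<^sup>2 + (R (v' M))\<^sup>2)"
        by (rule sum.lessThan_Suc)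
      also have "\<dots> = (\<Sum>m<M. (C (u m))\<^sup>2 + (R (v m))\<^sup>2)"
        unfolding s2 z norm_props(1)[OF C] norm_props(1)[OF R] by simp
      finally show ?thesis by simp
    qed
    show "\<exists>a\<in>{ereal ((1/2) * (\<Sum>m<Suc M. (C (u m))\<^sup>2 + (R (v m))\<^sup>2)) | u v.
      (\<forall>i j. X $ i $ j = (\<Sum>m<Suc M. u m $ i * v m $ j))}.
        a \<le> ereal ((1/2) * (\<Sum>m<M. (C (u m))\<^sup>2 + (R (v m))\<^sup>2))"
      by (rule bexI[OF _ mem]) (simp only: eq order_refl)
  qed
qed

lemma fD_lim:
  assumes C: "is_norm C" and R: "is_norm R"
  shows "(\<lambda>M. fDM C R M X) \<longlonglongrightarrow> ereal (Inf (decS C R X))"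
proof -
  have "(\<lambda>M. fDM C R M X) \<longlonglongrightarrow> (INF M. fDM C R M X)" by (rule LIMSEQ_INF[OF fDM_dec[OF C R]])
  then show ?thesis unfolding fDM_INF .
qed

lemma fD_inf_eq:
  assumes C: "is_norm C" and R: "is_norm R"
  shows "fD_inf C R X = Inf (decS C R X)"
  unfolding fD_inf_def using limI[OF fD_lim[OF C R]] by simp

theorem proposition1:
  fixes C :: "real^'n \<Rightarrow> real" and R :: "real^'p \<Rightarrow> real"
  assumes "is_norm C" and "is_norm R"
  shows "(\<forall>X. \<exists>L::real. (\<lambda>M. fDM C R M X) \<longlonglongrightarrow> ereal L)
         \<and> is_norm (fD_inf C R)"
proof
  show "\<forall>X. \<exists>L::real. (\<lambda>M. fDM C R M X) \<longlonglongrightarrow> ereal L"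
    using fD_lim[OF assms] by blast
  define g where "g X = Inf (decS C R X)" for X :: "real^'p^'n"
  have geq: "fD_inf C R = g" using fD_inf_eq[OF assms] g_def by auto
  have low: "g X \<le> s" if "s \<in> decS C R X" for X s
    unfolding g_def by (rule cInf_lower[OF that decS_bdd])
  have great: "y \<le> g X" if "\<And>s. s \<in> decS C R X \<Longrightarrow> y \<le> s" for X y
    unfolding g_def by (rule cInf_greatest[OF decS_nonempty that])
  have nn: "0 \<le> g X" for X by (rule great) (rule decS_nonneg)
  have g0: "g 0 = 0" using low[OF decS_zero] nn[of 0] by simp
  obtain K where K: "K > 0" "\<And>X s i j. s \<in> decS C R X \<Longrightarrow> \<bar>X $ i $ j\<bar> \<le> K * s"
    using decS_coord[OF assms] by blast
  have zero: "g X = 0 \<longleftrightarrow> X = 0" for X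
  proof
    assume "g X = 0"
    have "\<bar>X $ i $ j\<bar> / K \<le> g X" for i j
      by (rule great) (use K in \<open>simp add: field_simps mult.commute\<close>)
    then have "X $ i $ j = 0" for i j using \<open>g X = 0\<close> K(1)
      by (metis abs_le_zero_iff divide_le_0_iff less_le_not_le)
    then show "X = 0" by (simp add: vec_eq_iff)
  qed (simp add: g0)
  have sc_le: "g (c *\<^sub>R X) \<le> \<bar>c\<bar> * g X" for c X
  proof (cases "c = 0")
    case True then show ?thesis using g0 by simp
  next
    case False
    have "g (c *\<^sub>R X) / \<bar>c\<bar> \<le> g X"
    proof (rule great)
      fix s assume "s \<in> decS C R X"
      then have "g (c *\<^sub>R X) \<le> \<bar>c\<bar> * s" using low decS_scale[OF assms] by blast
      then show "g (c *\<^sub>R X) / \<bar>c\<bar> \<le> s" using False by (simp add: field_simps mult.commute)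
    qed
    then show ?thesis using False by (simp add: field_simps mult.commute)
  qed
  have sc: "g (c *\<^sub>R X) = \<bar>c\<bar> * g X" for c X
  proof (cases "c = 0")
    case True then show ?thesis using g0 by simp
  next
    case False
    have "g X = g ((1/c) *\<^sub>R (c *\<^sub>R X))" using False by simp
    also have "\<dots> \<le> \<bar>1/c\<bar> * g (c *\<^sub>R X)" by (rule sc_le)
    finally have "\<bar>c\<bar> * g X \<le> g (c *\<^sub>R X)" using False by (simp add: field_simps)
    then show ?thesis using sc_le[of c X] by simp
  qed
  have tri: "g (X + Y) \<le> g X + g Y" for X Y
  proof -
    have "g (X + Y) - g X \<le> t" if t: "t \<in> decS C R Y" for t
    proof -
      have "g (X + Y) - t \<le> g X"
      proof (rule great)
        fix s assume "s \<in> decS C R X"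
        then show "g (X + Y) - t \<le> s" using low[OF decS_add[OF _ t]] by force
      qed
      then show ?thesis by simp
    qed
    then have "g (X + Y) - g X \<le> g Y" by (rule great)
    then show ?thesis by simp
  qed
  show "is_norm (fD_inf C R)" unfolding geq is_norm_def using nn zero sc tri by blast
qed

end
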